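(* Let $f$ be as in the standing setting and quasi-strongly convex on $X$ with constant $\kappa_f>0$, i.e. $f^*\ge f(x)+\langle\nabla f(x),\bar x-x\rangle+\frac{\kappa_f}{2}\|x-\bar x\|^2$ for all $x\in X$. Let $x^0\in X$ and $x^{k+1}=[x^k-\frac1{L_f}\nabla f(x^k)]_X$ for $k\ge0$ (projected gradient method with constant step size $1/L_f$), and $\bar x^k=[x^k]_{X^*}$. Then, with $\mu_f=\kappa_f/L_f$, $$\|x^k-\bar x^k\|^2\le\left(\frac{1-\mu_f}{1+\mu_f}\right)^k\|x^0-\bar x^0\|^2\qquad\forall k\ge0.$$
   Context: Standing setting: $X\subseteq\mathbb{R}^n$ is a nonempty closed convex set; $f:X\to\mathbb{R}$ is convex and continuously differentiable, with $L_f$-Lipschitz continuous gradient on $X$ ($L_f>0$). Consider $f^*=\min_{x\in X}f(x)$ with optimal set $X^*$ nonempty and closed and $f^*$ finite. $\|\cdot\|$ is the Euclidean norm, $[u]_S$ is the Euclidean projection onto a closed convex set $S$, and $\bar x=[x]_{X^*}$. *)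

theory Defs
  imports "HOL-Analysis.Analysis"
begin

fun pgm :: "'a::euclidean_space set \<Rightarrow> ('a \<Rightarrow> 'a) \<Rightarrow> real \<Rightarrow> 'a \<Rightarrow> nat \<Rightarrow> 'a" where
  "pgm X g L x0 0 = x0"
| "pgm X g L x0 (Suc k) = closest_point X (pgm X g L x0 k - (1 / L) *\<^sub>R g (pgm X g L x0 k))"

definition optval :: "('a \<Rightarrow> real) \<Rightarrow> 'a set \<Rightarrow> real" where
  "optval f X = (INF x\<in>X. f x)"

definition optset :: "('a \<Rightarrow> real) \<Rightarrow> 'a set \<Rightarrow> 'a set" where
  "optset f X = {x \<in> X. f x = optval f X}"

end

theory Submission
  imports Defs
begin


lemma line_deriv:
  fixes f :: "'a::euclidean_space \<Rightarrow> real"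
  assumes "(f has_derivative (\<lambda>h. G \<bullet> h)) (at (a + t *\<^sub>R v))"
  shows "((\<lambda>s. f (a + s *\<^sub>R v)) has_real_derivative (G \<bullet> v)) (at t)"
proof -
  have d1: "((\<lambda>s. a + s *\<^sub>R v) has_derivative (\<lambda>h. h *\<^sub>R v)) (at t)"
    by (auto intro!: derivative_eq_intros)
  have "((\<lambda>s. f (a + s *\<^sub>R v)) has_derivative (\<lambda>h. G \<bullet> (h *\<^sub>R v))) (at t)"
    using has_derivative_compose[OF d1 assms] by (simp add: o_def)
  moreover have "(\<lambda>h. G \<bullet> (h *\<^sub>R v)) = (*) (G \<bullet> v)" by (auto simp: fun_eq_iff)
  ultimately show ?thesis
    by (simp add: has_field_derivative_def)
qed

lemma cp_char:
  fixes S :: "'a::euclidean_space set"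
  assumes "convex S" "closed S" "x \<in> S" "\<And>z. z \<in> S \<Longrightarrow> (a - x) \<bullet> (z - x) \<le> 0"
  shows "x = closest_point S a"
proof (rule closest_point_unique[OF assms(1-3)], intro ballI)
  fix z assume z: "z \<in> S"
  have e: "a - z = (a - x) - (z - x)" by simp
  have "(norm (a - z))\<^sup>2 = (norm (a - x))\<^sup>2 - 2 * ((a - x) \<bullet> (z - x)) + (norm (z - x))\<^sup>2"
    unfolding e by (simp add: power2_norm_eq_inner inner_diff_left inner_diff_right inner_commute)
  then have "(norm (a - x))\<^sup>2 \<le> (norm (a - z))\<^sup>2" using assms(4)[OF z] by (smt (verit) zero_le_power2)
  then show "dist a x \<le> dist a z" by (simp add: dist_norm power2_le_iff_abs_le abs_le_square_iff)
qed

lemma descent: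
  fixes f :: "'a::euclidean_space \<Rightarrow> real"
  assumes cX: "convex X"
    and f_grad: "\<And>x. x \<in> X \<Longrightarrow> (f has_derivative (\<lambda>h. g x \<bullet> h)) (at x)"
    and g_lip: "\<And>x y. x \<in> X \<Longrightarrow> y \<in> X \<Longrightarrow> norm (g x - g y) \<le> L * norm (x - y)"
    and x: "x \<in> X" and y: "y \<in> X"
  shows "f y \<le> f x + g x \<bullet> (y - x) + L / 2 * (norm (y - x))\<^sup>2"
proof -
  define v where "v = y - x"
  define \<phi> where "\<phi> t = f (x + t *\<^sub>R v) - t * (g x \<bullet> v) - L / 2 * t\<^sup>2 * (norm v)\<^sup>2" for t
  have xt: "x + t *\<^sub>R v \<in> X" if "t \<in> {0..1}" for t
  proof -
    have "x + t *\<^sub>R v = (1 - t) *\<^sub>R x + t *\<^sub>R y" by (simp add: v_def algebra_simps)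
    then show ?thesis using convexD_alt[OF cX x y, of t] that by auto
  qed
  have "\<phi> 1 \<le> \<phi> 0"
  proof (rule deriv_nonpos_imp_antimono[where g = \<phi> and a = 0 and b = 1 and g' = "\<lambda>t. g (x + t *\<^sub>R v) \<bullet> v - g x \<bullet> v - L * t * (norm v)\<^sup>2"])
    fix t :: real assume t: "t \<in> {0..1}"
    have d: "((\<lambda>s. f (x + s *\<^sub>R v)) has_real_derivative (g (x + t *\<^sub>R v) \<bullet> v)) (at t)"
      by (rule line_deriv[OF f_grad[OF xt[OF t]]])
    show "(\<phi> has_real_derivative g (x + t *\<^sub>R v) \<bullet> v - g x \<bullet> v - L * t * (norm v)\<^sup>2) (at t)"
      unfolding \<phi>_def
      by (rule derivative_eq_intros d | simp)+
    have "(g (x + t *\<^sub>R v) - g x) \<bullet> v \<le> norm (g (x + t *\<^sub>R v) - g x) * norm v"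
      by (rule norm_cauchy_schwarz)
    also have "\<dots> \<le> (L * norm (t *\<^sub>R v)) * norm v"
      using g_lip[OF xt[OF t] x] by (intro mult_right_mono) auto
    also have "\<dots> = L * t * (norm v)\<^sup>2" using t by (simp add: power2_eq_square)
    finally show "g (x + t *\<^sub>R v) \<bullet> v - g x \<bullet> v - L * t * (norm v)\<^sup>2 \<le> 0"
      by (simp add: inner_diff_left)
  qed simp
  then show ?thesis by (simp add: \<phi>_def v_def)
qed

lemma qg:
  fixes f :: "'a::euclidean_space \<Rightarrow> real"
  assumes cX: "convex X"
    and f_grad: "\<And>x. x \<in> X \<Longrightarrow> (f has_derivative (\<lambda>h. g x \<bullet> h)) (at x)"
    and PX: "P \<subseteq> X" and Pconv: "convex P" and Pcl: "closed P" and Pne: "P \<noteq> {}"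
    and lower: "\<And>y. y \<in> X \<Longrightarrow> fs \<le> f y"
    and qsc: "\<And>x. x \<in> X \<Longrightarrow>
       fs \<ge> f x + g x \<bullet> (closest_point P x - x) + \<kappa> / 2 * (norm (x - closest_point P x))\<^sup>2"
    and x: "x \<in> X"
  shows "f x - fs \<ge> \<kappa> / 2 * (norm (x - closest_point P x))\<^sup>2"
proof -
  define xb where "xb = closest_point P x"
  define v where "v = x - xb"
  define c where "c = \<kappa> / 2 * (norm v)\<^sup>2"
  have xbP: "xb \<in> P" unfolding xb_def by (rule closest_point_in_set[OF Pcl Pne])
  have xbX: "xb \<in> X" using xbP PX by auto
  have xt: "xb + t *\<^sub>R v \<in> X" if "t \<in> {0..1}" for t
  proof -
    have "xb + t *\<^sub>R v = (1 - t) *\<^sub>R xb + t *\<^sub>R x" by (simp add: v_def algebra_simps)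
    then show ?thesis using convexD_alt[OF cX xbX x, of t] that by auto
  qed
  have cpt: "closest_point P (xb + t *\<^sub>R v) = xb" if "t \<ge> 0" for t
  proof -
    have "xb = closest_point P (xb + t *\<^sub>R v)"
    proof (rule cp_char[OF Pconv Pcl xbP])
      fix z assume z: "z \<in> P"
      have "(x - xb) \<bullet> (z - xb) \<le> 0" unfolding xb_def by (rule closest_point_dot[OF Pconv Pcl z])
      then show "(xb + t *\<^sub>R v - xb) \<bullet> (z - xb) \<le> 0"
        using that by (simp add: v_def mult_nonneg_nonpos)
    qed
    then show ?thesis by simp
  qed
  define \<psi> where "\<psi> t = f (xb + t *\<^sub>R v) - fs" for t
  define h where "h t = \<psi> t / t - c * t" for t
  have hmono: "h s \<le> h 1" if s: "0 < s" "s \<le> 1" for s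
  proof (rule deriv_nonneg_imp_mono[where g = h and a = s and b = 1
        and g' = "\<lambda>t. (g (xb + t *\<^sub>R v) \<bullet> v) / t - \<psi> t / t\<^sup>2 - c"])
    fix t :: real assume t: "t \<in> {s..1}"
    then have t0: "t > 0" and tX: "t \<in> {0..1}" using s by auto
    have d: "((\<lambda>s. f (xb + s *\<^sub>R v)) has_real_derivative (g (xb + t *\<^sub>R v) \<bullet> v)) (at t)"
      by (rule line_deriv[OF f_grad[OF xt[OF tX]]])
    show "(h has_real_derivative (g (xb + t *\<^sub>R v) \<bullet> v) / t - \<psi> t / t\<^sup>2 - c) (at t)"
      unfolding h_def \<psi>_def using t0
      by (auto intro!: derivative_eq_intros d simp: field_simps power2_eq_square)
    have q: "fs \<ge> f (xb + t *\<^sub>R v) + g (xb + t *\<^sub>R v) \<bullet> (xb - (xb + t *\<^sub>R v))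
          + \<kappa> / 2 * (norm ((xb + t *\<^sub>R v) - xb))\<^sup>2"
      using qsc[OF xt[OF tX]] cpt[of t] t0 by simp
    then have "t * (g (xb + t *\<^sub>R v) \<bullet> v) \<ge> \<psi> t + c * t\<^sup>2"
      using t0 by (simp add: \<psi>_def c_def power_mult_distrib algebra_simps)
    moreover have "(g (xb + t *\<^sub>R v) \<bullet> v) / t - \<psi> t / t\<^sup>2 - c
        = (t * (g (xb + t *\<^sub>R v) \<bullet> v) - (\<psi> t + c * t\<^sup>2)) / t\<^sup>2"
      using t0 by (simp add: field_simps power2_eq_square)
    ultimately show "(g (xb + t *\<^sub>R v) \<bullet> v) / t - \<psi> t / t\<^sup>2 - c \<ge> 0"
      using t0 by (simp only:) (intro divide_nonneg_pos; simp)
  qed (use s in auto)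
  have key: "\<psi> 1 - c \<ge> - c * s" if s: "0 < s" "s \<le> 1" for s
  proof -
    have "\<psi> s \<ge> 0" using lower[OF xt[of s]] s by (simp add: \<psi>_def)
    then have "h s \<ge> - c * s" using s by (simp add: h_def)
    then show ?thesis using hmono[OF s] by (simp add: h_def)
  qed
  have "\<psi> 1 \<ge> c"
  proof (rule ccontr)
    assume n: "\<not> c \<le> \<psi> 1"
    have p0: "\<psi> 1 \<ge> 0" using lower[OF x] by (simp add: \<psi>_def v_def)
    then have cpos: "c > 0" using n by simp
    define s where "s = min 1 ((c - \<psi> 1) / (2 * c))"
    have s0: "0 < s" "s \<le> 1" using n cpos by (auto simp: s_def)
    have "c * s \<le> c * ((c - \<psi> 1) / (2 * c))" using cpos unfolding s_def
      by (intro mult_left_mono) auto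
    also have "\<dots> = (c - \<psi> 1) / 2" using cpos by simp
    finally have "c * s \<le> (c - \<psi> 1) / 2" .
    then show False using key[OF s0] n by simp
  qed
  then show ?thesis by (simp add: \<psi>_def c_def v_def xb_def)
qed

lemma step:
  fixes f :: "'a::euclidean_space \<Rightarrow> real"
  assumes cX: "convex X" and Xcl: "closed X" and Xne: "X \<noteq> {}"
    and f_grad: "\<And>x. x \<in> X \<Longrightarrow> (f has_derivative (\<lambda>h. g x \<bullet> h)) (at x)"
    and g_lip: "\<And>x y. x \<in> X \<Longrightarrow> y \<in> X \<Longrightarrow> norm (g x - g y) \<le> L * norm (x - y)"
    and Lpos: "L > 0"
    and PX: "P \<subseteq> X" and Pconv: "convex P" and Pcl: "closed P" and Pne: "P \<noteq> {}"
    and lower: "\<And>y. y \<in> X \<Longrightarrow> fs \<le> f y"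
    and qsc: "\<And>x. x \<in> X \<Longrightarrow>
       fs \<ge> f x + g x \<bullet> (closest_point P x - x) + \<kappa> / 2 * (norm (x - closest_point P x))\<^sup>2"
    and x: "x \<in> X"
    and x'_def: "x' = closest_point X (x - (1 / L) *\<^sub>R g x)"
  shows "(\<kappa> + L) * (norm (x' - closest_point P x'))\<^sup>2 \<le> (L - \<kappa>) * (norm (x - closest_point P x))\<^sup>2"
proof -
  define xb where "xb = closest_point P x"
  define xb' where "xb' = closest_point P x'"
  define a where "a = x - x'"
  define b where "b = x' - xb"
  define G where "G = g x"
  define D where "D = (norm (x - xb))\<^sup>2"
  define D' where "D' = (norm (x' - xb'))\<^sup>2"
  have x'X: "x' \<in> X" unfolding x'_def by (rule closest_point_in_set[OF Xcl Xne])
  have xbP: "xb \<in> P" unfolding xb_def by (rule closest_point_in_set[OF Pcl Pne])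
  have xbX: "xb \<in> X" using xbP PX by auto
  have vi: "((x - (1 / L) *\<^sub>R G) - x') \<bullet> (xb - x') \<le> 0"
    unfolding x'_def G_def by (rule closest_point_dot[OF cX Xcl xbX])
  have "((x - (1 / L) *\<^sub>R G) - x') \<bullet> (xb - x') = (1 / L) * (G \<bullet> b) - a \<bullet> b"
    by (simp add: a_def b_def inner_diff_left inner_diff_right inner_commute algebra_simps)
  with vi have "(1 / L) * (G \<bullet> b) \<le> a \<bullet> b" by simp
  then have "L * ((1 / L) * (G \<bullet> b)) \<le> L * (a \<bullet> b)" using Lpos by (intro mult_left_mono) auto
  then have e2: "G \<bullet> b \<le> L * (a \<bullet> b)" using Lpos by simp
  have desc: "f x' \<le> f x + G \<bullet> (x' - x) + L / 2 * (norm a)\<^sup>2"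
    using descent[OF cX f_grad g_lip x x'X] by (simp add: G_def a_def norm_minus_commute)
  have q: "fs \<ge> f x + G \<bullet> (xb - x) + \<kappa> / 2 * D"
    using qsc[OF x] by (simp add: G_def xb_def D_def)
  have e1: "G \<bullet> (x' - x) - G \<bullet> (xb - x) = G \<bullet> b"
    by (simp add: b_def inner_diff_right)
  have xab: "x - xb = a + b" by (simp add: a_def b_def)
  have e3: "D = (norm a)\<^sup>2 + 2 * (a \<bullet> b) + (norm b)\<^sup>2"
    unfolding D_def xab by (simp add: power2_norm_eq_inner inner_add_left inner_add_right inner_commute)
  have e4: "L * (a \<bullet> b) + L / 2 * (norm a)\<^sup>2 = L / 2 * D - L / 2 * (norm b)\<^sup>2"
    by (simp add: e3 algebra_simps)
  have qg': "f x' - fs \<ge> \<kappa> / 2 * D'"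
    using qg[OF cX f_grad PX Pconv Pcl Pne lower qsc x'X] by (simp add: D'_def xb'_def)
  have "dist x' xb' \<le> dist x' xb" unfolding xb'_def by (rule closest_point_le[OF Pcl xbP])
  then have "norm (x' - xb') \<le> norm b" by (simp add: dist_norm b_def)
  then have "D' \<le> (norm b)\<^sup>2" unfolding D'_def by (simp add: power_mono)
  then have e5: "L / 2 * D' \<le> L / 2 * (norm b)\<^sup>2" using Lpos by (intro mult_left_mono) auto
  have "\<kappa> / 2 * D' + L / 2 * D' \<le> L / 2 * D - \<kappa> / 2 * D"
    using qg' desc q e1 e2 e4 e5 by linarith
  then show ?thesis by (simp add: D_def D'_def xb_def xb'_def algebra_simps)
qed



theorem theorem11:
  fixes X :: "'a::euclidean_space set" and f :: "'a \<Rightarrow> real" and g :: "'a \<Rightarrow> 'a"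
    and L \<kappa> :: real and x0 :: 'a
  assumes X_ne: "X \<noteq> {}" and X_closed: "closed X" and X_convex: "convex X"
    and f_convex: "convex_on X f"
    and f_grad: "\<And>x. x \<in> X \<Longrightarrow> (f has_derivative (\<lambda>h. g x \<bullet> h)) (at x)"
    and g_cont: "continuous_on X g"
    and L_pos: "L > 0"
    and g_lip: "\<And>x y. x \<in> X \<Longrightarrow> y \<in> X \<Longrightarrow> norm (g x - g y) \<le> L * norm (x - y)"
    and f_bdd: "bdd_below (f ` X)"
    and Xs_ne: "optset f X \<noteq> {}" and Xs_closed: "closed (optset f X)"
    and \<kappa>_pos: "\<kappa> > 0"
    and qsc: "\<And>x. x \<in> X \<Longrightarrow>
       optval f X \<ge> f x + g x \<bullet> (closest_point (optset f X) x - x)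
                 + \<kappa> / 2 * (norm (x - closest_point (optset f X) x))\<^sup>2"
    and x0_in: "x0 \<in> X"
  shows "\<forall>k. (norm (pgm X g L x0 k - closest_point (optset f X) (pgm X g L x0 k)))\<^sup>2
          \<le> ((1 - \<kappa> / L) / (1 + \<kappa> / L)) ^ k * (norm (x0 - closest_point (optset f X) x0))\<^sup>2"
  proof -
  define P where "P = optset f X"
  define fs where "fs = optval f X"
  have lower: "fs \<le> f y" if "y \<in> X" for y
    unfolding fs_def optval_def using f_bdd that by (auto intro: cINF_lower)
  have PX: "P \<subseteq> X" by (auto simp: P_def optset_def)
  have Pconv: "convex P"
  proof (rule convexI)
    fix u v :: 'a and a b :: real
    assume u: "u \<in> P" and v: "v \<in> P" and ab: "0 \<le> a" "0 \<le> b" "a + b = 1"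
    have uX: "u \<in> X" and vX: "v \<in> X" and fu: "f u = fs" and fv: "f v = fs"
      using u v by (auto simp: P_def optset_def fs_def)
    have wX: "a *\<^sub>R u + b *\<^sub>R v \<in> X" using convexD[OF X_convex uX vX ab] .
    have "f (a *\<^sub>R u + b *\<^sub>R v) \<le> a * f u + b * f v"
      using convex_onD[OF f_convex, of b u v] uX vX ab
      by (smt (verit, best))
    also have "\<dots> = fs" using fu fv ab by (simp add: algebra_simps)
      (metis distrib_right mult_1)
    finally have "f (a *\<^sub>R u + b *\<^sub>R v) = fs" using lower[OF wX] by simp
    then show "a *\<^sub>R u + b *\<^sub>R v \<in> P" using wX by (simp add: P_def optset_def fs_def)
  qed
  have Pcl: "closed P" and Pne: "P \<noteq> {}" using Xs_closed Xs_ne by (auto simp: P_def)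
  have qsc': "\<And>x. x \<in> X \<Longrightarrow>
       fs \<ge> f x + g x \<bullet> (closest_point P x - x) + \<kappa> / 2 * (norm (x - closest_point P x))\<^sup>2"
    using qsc by (simp add: P_def fs_def)
  define xs where "xs k = pgm X g L x0 k" for k
  define d where "d k = (norm (xs k - closest_point P (xs k)))\<^sup>2" for k
  define r where "r = (1 - \<kappa> / L) / (1 + \<kappa> / L)"
  have inX: "xs k \<in> X" for k
    by (induction k) (auto simp: xs_def x0_in closest_point_in_set[OF X_closed X_ne])
  have xsS: "xs (Suc k) = closest_point X (xs k - (1 / L) *\<^sub>R g (xs k))" for k
    unfolding xs_def by simp
  have st: "(\<kappa> + L) * d (Suc k) \<le> (L - \<kappa>) * d k" for k
    unfolding d_def
    by (rule step[OF X_convex X_closed X_ne f_grad g_lip L_pos PX Pconv Pcl Pne lower qsc' inX])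
      (auto simp: xsS)
  have d0: "d k \<ge> 0" for k by (simp add: d_def)
  have rdef: "r = (L - \<kappa>) / (L + \<kappa>)"
  proof -
    have "r = ((L - \<kappa>) / L) / ((L + \<kappa>) / L)"
      using L_pos by (simp add: r_def diff_divide_distrib add_divide_distrib)
    then show ?thesis using L_pos by simp
  qed
  have st': "d (Suc k) \<le> r * d k" for k
  proof -
    have "d (Suc k) \<le> (L - \<kappa>) * d k / (\<kappa> + L)"
      using st[of k] L_pos \<kappa>_pos by (simp add: pos_le_divide_eq mult.commute)
    then show ?thesis by (simp add: rdef add.commute)
  qed
  have main: "d k \<le> r ^ k * d 0" for k
  proof (cases "r \<ge> 0")
    case True
    show ?thesis
    proof (induction k)
      case (Suc k)
      have "d (Suc k) \<le> r * d k" by (rule st')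
      also have "\<dots> \<le> r * (r ^ k * d 0)" using Suc True by (intro mult_left_mono)
      finally show ?case by simp
    qed simp
  next
    case False
    have "d k = 0" for k
    proof -
      have "d (Suc k) \<le> r * d k" by (rule st')
      show ?thesis
      proof (rule ccontr)
        assume "d k \<noteq> 0"
        then have "d k > 0" using d0[of k] by simp
        then have "r * d k < 0" using False by (simp add: mult_neg_pos)
        then show False using \<open>d (Suc k) \<le> r * d k\<close> d0[of "Suc k"] by simp
      qed
    qed
    then show ?thesis by simp
  qed
  show ?thesis
    using main by (simp add: d_def xs_def r_def P_def)
qed

end
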